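(* Assume the codebook is randomly generated so that all symbols of all codewords are i.i.d. according to some distribution $P$ on $\mathcal X$. Then for any threshold constants $t_1,t_2\in\mathbb R$, any asynchronism level $A\ge1$, any message $m$ and any $l\in\{1,\dots,A\}$, $$\sum_{m'\neq m}\ \sum_{n=1}^{A+N-1}\ \sum_{i=1}^{\min(N,n)}\mathbb P_{m,l}\big(E(m',n,i)\big)\le\big(M^{-(t_1+t_2-1)}A+M^{-(t_2-1)}\big)\,\mathrm{poly}(N).$$
   Context: Channel: finite input alphabet $\mathcal X$, finite output alphabet $\mathcal Y$, transition probabilities $Q(y|x)$, and a noise symbol $\star\in\mathcal X$. A codebook has $M$ codewords $C^N(m)=(C_1(m),\dots,C_N(m))\in\mathcal X^N$, $m=1,\dots,M$. Given the codebook, the message $m$ and the start time $\nu=l$, the outputs $Y_1,Y_2,\dots$ are independent with $Y_i\sim Q(\cdot|\star)$ if $i\le l-1$ or $i\ge l+N$, and $Y_i\sim Q(\cdot|C_{i-l+1}(m))$ for $l\le i\le l+N-1$; $\mathbb P_{m,l}$ is the joint probability over the random codebook and the outputs. Notation: for $j\ge i$, $x_i^j=(x_i,\dots,x_j)$ and $x^j=x_1^j$; $\hat P_{(x^n,y^n)}$ is the empirical joint distribution of a pair of sequences and $\hat P_{y^n}$ the empirical distribution of $y^n$; $I(J)$ is the mutual information of a joint distribution $J$ on $\mathcal X\times\mathcal Y$; $D$ is Kullback–Leibler divergence; logs are natural. For a message $m'$, time $n\ge1$, $i\in\{1,\dots,\min(N,n)\}$ and $k\in\{1,\dots,i\}$,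 $E(m',n,i,k)$ is the intersection of the events $$k\,I\big(\hat P_{(C^k(m'),Y_{n-i+1}^{n-i+k})}\big)+(i-k)\,I\big(\hat P_{(C_{k+1}^i(m'),Y_{n-i+k+1}^n)}\big)\ge t_2\ln M\quad\text{and}\quad i\,D\big(\hat P_{Y_{n-i+1}^n}\,\|\,Q(\cdot|\star)\big)\ge t_1\ln M$$ (a term with zero length, i.e. $(i-k)=0$, is taken to be $0$), and $E(m',n,i)=\bigcap_{k=1}^iE(m',n,i,k)$. $\mathrm{poly}(N)$ denotes a term growing no faster than polynomially in $N$. *)

theory Defs
  imports "HOL-Probability.Probability"
begin

definition seg :: "(nat \<Rightarrow> 'a) \<Rightarrow> nat \<Rightarrow> nat \<Rightarrow> 'a list" where
  "seg f a len = map f [a..<a+len]"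

text \<open>Empirical (joint) distribution of a finite sequence (of pairs); zero for the empty sequence.\<close>
definition emp :: "'a list \<Rightarrow> 'a \<Rightarrow> real" where
  "emp zs z = real (length (filter (\<lambda>w. w = z) zs)) / real (length zs)"

definition mutual_info :: "('x::finite \<times> 'y::finite \<Rightarrow> real) \<Rightarrow> real" where
  "mutual_info J =
     (\<Sum>x\<in>UNIV. \<Sum>y\<in>UNIV.
        if J (x, y) > 0
        then J (x, y) * ln (J (x, y) / ((\<Sum>y'\<in>UNIV. J (x, y')) * (\<Sum>x'\<in>UNIV. J (x', y))))
        else 0)"

definition KL_div :: "('y::finite \<Rightarrow> real) \<Rightarrow> ('y \<Rightarrow> real) \<Rightarrow> ereal" where
  "KL_div V q =
     (if \<forall>y. V y > 0 \<longrightarrow> q y > 0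
      then ereal (\<Sum>y\<in>UNIV. if V y > 0 then V y * ln (V y / q y) else 0)
      else \<infinity>)"

text \<open>Random codebook: symbol j of codeword m is c (m, j), all i.i.d. P, for m \<in> {1..M}, j \<in> {1..N}.\<close>
definition codebook_pmf :: "'x pmf \<Rightarrow> nat \<Rightarrow> nat \<Rightarrow> (nat \<times> nat \<Rightarrow> 'x) pmf" where
  "codebook_pmf P M N = Pi_pmf ({1..M} \<times> {1..N}) undefined (\<lambda>_. P)"

text \<open>Channel outputs Y_1 ... Y_T given codebook c, message m and start time l
  (only the outputs relevant to the events, T = A + N - 1, are generated).\<close>
definition outputs_pmf ::
  "('x \<Rightarrow> 'y pmf) \<Rightarrow> 'x \<Rightarrow> nat \<Rightarrow> nat \<Rightarrow> (nat \<times> nat \<Rightarrow> 'x) \<Rightarrow> nat \<Rightarrow> nat \<Rightarrow> (nat \<Rightarrow> 'y) pmf" where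
  "outputs_pmf Q star N T c m l =
     Pi_pmf {1..T} undefined
       (\<lambda>i. if l \<le> i \<and> i \<le> l + N - 1 then Q (c (m, i - l + 1)) else Q star)"

definition joint_pmf ::
  "'x pmf \<Rightarrow> ('x \<Rightarrow> 'y pmf) \<Rightarrow> 'x \<Rightarrow> nat \<Rightarrow> nat \<Rightarrow> nat \<Rightarrow> nat \<Rightarrow> nat
     \<Rightarrow> ((nat \<times> nat \<Rightarrow> 'x) \<times> (nat \<Rightarrow> 'y)) pmf" where
  "joint_pmf P Q star M N A m l =
     do { c \<leftarrow> codebook_pmf P M N;
          y \<leftarrow> outputs_pmf Q star N (A + N - 1) c m l;
          return_pmf (c, y) }"

definition E_k ::
  "('x::finite \<Rightarrow> 'y::finite pmf) \<Rightarrow> 'x \<Rightarrow> nat \<Rightarrow> real \<Rightarrow> real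
     \<Rightarrow> nat \<Rightarrow> nat \<Rightarrow> nat \<Rightarrow> nat \<Rightarrow> (nat \<times> nat \<Rightarrow> 'x) \<Rightarrow> (nat \<Rightarrow> 'y) \<Rightarrow> bool" where
  "E_k Q star M t1 t2 m' n i k c y \<longleftrightarrow>
     real k * mutual_info (emp (zip (seg (\<lambda>j. c (m', j)) 1 k) (seg y (n - i + 1) k)))
       + real (i - k) * mutual_info (emp (zip (seg (\<lambda>j. c (m', j)) (k + 1) (i - k))
                                            (seg y (n - i + k + 1) (i - k))))
       \<ge> t2 * ln (real M)
     \<and> ereal (real i) * KL_div (emp (seg y (n - i + 1) i)) (pmf (Q star)) \<ge> ereal (t1 * ln (real M))"

definition E_all ::
  "('x::finite \<Rightarrow> 'y::finite pmf) \<Rightarrow> 'x \<Rightarrow> nat \<Rightarrow> real \<Rightarrow> real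
     \<Rightarrow> nat \<Rightarrow> nat \<Rightarrow> nat \<Rightarrow> (nat \<times> nat \<Rightarrow> 'x) \<Rightarrow> (nat \<Rightarrow> 'y) \<Rightarrow> bool" where
  "E_all Q star M t1 t2 m' n i c y \<longleftrightarrow> (\<forall>k\<in>{1..i}. E_k Q star M t1 t2 m' n i k c y)"

end

theory Submission
  imports Defs
begin


lemma bind_le:
  assumes "\<And>x. x \<in> set_pmf p \<Longrightarrow> measure_pmf.prob (q x) S \<le> B * indicator T x" "B \<ge> 0"
  shows "measure_pmf.prob (bind_pmf p q) S \<le> B * measure_pmf.prob p T"
proof -
  have "emeasure (measure_pmf (bind_pmf p q)) S = (\<integral>\<^sup>+x. emeasure (measure_pmf (q x)) S \<partial>p)" by simp
  also have "\<dots> \<le> (\<integral>\<^sup>+x. ennreal B * indicator T x \<partial>p)"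
  proof (rule nn_integral_mono_AE)
    show "AE x in measure_pmf p. emeasure (measure_pmf (q x)) S \<le> ennreal B * indicator T x"
      unfolding AE_measure_pmf_iff
    proof (intro ballI)
      fix x assume "x \<in> set_pmf p"
      then have "measure_pmf.prob (q x) S \<le> B * indicator T x" by (rule assms)
      then have "ennreal (measure_pmf.prob (q x) S) \<le> ennreal (B * indicator T x)"
        by (rule ennreal_leI)
      then show "emeasure (measure_pmf (q x)) S \<le> ennreal B * indicator T x"
        by (cases "x \<in> T") (auto simp: measure_pmf.emeasure_eq_measure indicator_def)
    qed
  qed
  also have "\<dots> = ennreal B * emeasure (measure_pmf p) T"
    by (simp add: nn_integral_cmult_indicator)
  also have "\<dots> = ennreal (B * measure_pmf.prob p T)"
    using assms(2) by (simp add: measure_pmf.emeasure_eq_measure ennreal_mult)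
  finally show ?thesis
    by (simp add: measure_pmf.emeasure_eq_measure ennreal_le_iff assms(2))
qed

lemma bind_le1:
  assumes "\<And>x. x \<in> set_pmf p \<Longrightarrow> measure_pmf.prob (q x) S \<le> B" "B \<ge> 0"
  shows "measure_pmf.prob (bind_pmf p q) S \<le> B"
proof -
  have "measure_pmf.prob (bind_pmf p q) S \<le> B * measure_pmf.prob p UNIV"
    by (rule bind_le) (use assms in auto)
  then show ?thesis by simp
qed



lemma count_list_filter: "count_list xs z = length (filter (\<lambda>w. w = z) xs)"
  by (induction xs) auto

lemma sum_list_count_real:
  fixes h :: "'z::finite \<Rightarrow> real"
  shows "sum_list (map h zs) = (\<Sum>z\<in>UNIV. real (count_list zs z) * h z)"
proof (induction zs)
  case Nil then show ?case by simp
next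
  case (Cons x zs)
  have "(\<Sum>z\<in>UNIV. real (count_list (x # zs) z) * h z)
      = (\<Sum>z\<in>UNIV. real (count_list zs z) * h z + (if x = z then h z else 0))"
    by (rule sum.cong) (auto simp: distrib_right)
  also have "\<dots> = (\<Sum>z\<in>UNIV. real (count_list zs z) * h z) + h x"
    by (simp add: sum.distrib)
  finally show ?case using Cons by simp
qed

lemma emp_nonneg: "emp zs z \<ge> 0"
  by (simp add: emp_def)

lemma emp_count: "length zs = i \<Longrightarrow> i > 0 \<Longrightarrow> real i * emp zs z = real (count_list zs z)"
  by (simp add: emp_def count_list_filter)

lemma emp_pos: "z \<in> set zs \<Longrightarrow> emp zs z > 0"
proof -
  assume "z \<in> set zs"
  then have "count_list zs z \<noteq> 0" by (simp add: count_list_0_iff)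
  moreover have "length zs > 0" using \<open>z \<in> set zs\<close> by (cases zs) auto
  ultimately show ?thesis by (simp add: emp_def count_list_filter)
qed

lemma emp_types:
  fixes zs :: "'z::finite list"
  assumes "length zs = i"
  shows "emp zs \<in> (\<lambda>k z. real (k z) / real i) ` (PiE UNIV (\<lambda>_. {..i}))"
proof
  let ?k = "\<lambda>z. length (filter (\<lambda>w. w = z) zs)"
  show "emp zs = (\<lambda>z. real (?k z) / real i)" using assms by (auto simp: emp_def)
  show "?k \<in> PiE UNIV (\<lambda>_. {..i})" using assms by (auto simp: length_filter_le)
qed

lemma card_types:
  "card ((\<lambda>k z. real (k z) / real i) ` (PiE (UNIV::'z::finite set) (\<lambda>_. {..i}))) \<le> (i + 1) ^ CARD('z)"
proof -
  have "card ((\<lambda>k z. real (k z) / real i) ` (PiE (UNIV::'z set) (\<lambda>_. {..i})))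
        \<le> card (PiE (UNIV::'z set) (\<lambda>_. {..i}))" by (rule card_image_le) (simp add: finite_PiE)
  also have "\<dots> = (i + 1) ^ CARD('z)" by (simp add: card_PiE)
  finally show ?thesis .
qed

lemma union_types:
  fixes st :: "'w \<Rightarrow> 'j"
  assumes "\<And>w. st w \<in> Ty" "finite Ty" "card Ty \<le> K"
    "\<And>J. J \<in> Ty \<Longrightarrow> \<Phi> J \<Longrightarrow> measure_pmf.prob p {w. st w = J} \<le> e" "e \<ge> 0"
  shows "measure_pmf.prob p {w. \<Phi> (st w)} \<le> real K * e"
proof -
  let ?I = "{J \<in> Ty. \<Phi> J}"
  have "{w. \<Phi> (st w)} \<subseteq> (\<Union>J\<in>?I. {w. st w = J})" using assms(1) by auto
  then have "measure_pmf.prob p {w. \<Phi> (st w)} \<le> measure_pmf.prob p (\<Union>J\<in>?I. {w. st w = J})"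
    by (rule measure_pmf.finite_measure_mono) simp
  also have "\<dots> \<le> (\<Sum>J\<in>?I. measure_pmf.prob p {w. st w = J})"
    by (rule measure_pmf.finite_measure_subadditive_finite) (use assms(2) in auto)
  also have "\<dots> \<le> (\<Sum>J\<in>?I. e)" by (rule sum_mono) (use assms(4) in auto)
  also have "\<dots> = real (card ?I) * e" by simp
  also have "\<dots> \<le> real K * e"
  proof -
    have "card ?I \<le> card Ty" by (rule card_mono) (use assms(2) in auto)
    with assms(3) have "real (card ?I) \<le> real K" by simp
    with assms(5) show ?thesis by (rule mult_right_mono[rotated])
  qed
  finally show ?thesis .
qed



definition Dc :: "'a pmf \<Rightarrow> ('a::finite \<times> 'b::finite \<Rightarrow> real) \<Rightarrow> real" where
  "Dc p0 J = (\<Sum>z\<in>UNIV. if J z > 0 then J z * ln (J z / ((\<Sum>a\<in>UNIV. J (a, snd z)) * pmf p0 (fst z))) else 0)"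

lemma core_zero:
  fixes p :: "'s \<Rightarrow> 'a::finite pmf" and ws :: "'b::finite list" and g :: "nat \<Rightarrow> 's"
  assumes pg: "\<And>t. t < i \<Longrightarrow> p (g t) = pz" and gS: "g ` {..<i} \<subseteq> S" and S: "finite S"
    and len: "length ws = i"
    and bad: "J z > 0" "pmf pz (fst z) = 0"
  shows "measure_pmf.prob (Pi_pmf S d p) {Z. emp (zip (map (Z \<circ> g) [0..<i]) ws) = J} = 0"
proof -
  have "{Z. emp (zip (map (Z \<circ> g) [0..<i]) ws) = J} \<inter> set_pmf (Pi_pmf S d p) = {}"
  proof (rule ccontr)
    assume "\<not> ?thesis"
    then obtain Z where Z: "emp (zip (map (Z \<circ> g) [0..<i]) ws) = J" "Z \<in> set_pmf (Pi_pmf S d p)"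
      by blast
    have "z \<in> set (zip (map (Z \<circ> g) [0..<i]) ws)"
    proof (rule ccontr)
      assume "z \<notin> set (zip (map (Z \<circ> g) [0..<i]) ws)"
      then have "emp (zip (map (Z \<circ> g) [0..<i]) ws) z = 0"
        by (simp add: emp_def count_list_filter[symmetric] count_list_0_iff)
      with Z bad show False by simp
    qed
    then obtain t where t: "t < i" "z = (Z (g t), ws ! t)"
      using len by (auto simp: in_set_zip)
    have "g t \<in> S" using gS t by auto
    from Z(2) have "pmf (Pi_pmf S d p) Z > 0" by (simp add: pmf_positive)
    moreover have "pmf (Pi_pmf S d p) Z = (\<Prod>x\<in>S. pmf (p x) (Z x))"
      using Z(2) S by (subst pmf_Pi) (auto simp: set_pmf_eq pmf_Pi split: if_splits)
    moreover have "pmf (p (g t)) (Z (g t)) = 0" using bad t pg by simp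
    moreover have "(\<Prod>x\<in>S. pmf (p x) (Z x)) = 0"
      using \<open>g t \<in> S\<close> S \<open>pmf (p (g t)) (Z (g t)) = 0\<close> by (metis prod_zero_iff)
    ultimately show False by simp
  qed
  then show ?thesis
    by (metis measure_Int_set_pmf measure_empty)
qed



lemma core_pos:
  fixes p :: "'s \<Rightarrow> 'a::finite pmf" and ws :: "'b::finite list" and g :: "nat \<Rightarrow> 's"
  assumes S: "finite S" and inj: "inj_on g {..<i}" and gS: "g ` {..<i} \<subseteq> S"
    and pg: "\<And>t. t < i \<Longrightarrow> p (g t) = p0" and len: "length ws = i"
    and pos: "\<And>z. J z > 0 \<Longrightarrow> pmf p0 (fst z) > 0" and ipos: "i > 0"
  shows "measure_pmf.prob (Pi_pmf S d p) {Z. emp (zip (map (Z \<circ> g) [0..<i]) ws) = J}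
           \<le> exp (- real i * Dc p0 J)"
proof (cases "\<exists>Z0. emp (zip (map (Z0 \<circ> g) [0..<i]) ws) = J")
  case False
  then have "{Z. emp (zip (map (Z \<circ> g) [0..<i]) ws) = J} = {}" by auto
  then show ?thesis by simp
next
  case True
  then obtain Z0 where Z0: "J = emp (zip (map (Z0 \<circ> g) [0..<i]) ws)" by metis
  have Jnn: "\<And>z. J z \<ge> 0" using Z0 emp_nonneg by metis
  define JB where "JB b = (\<Sum>a\<in>UNIV. J (a, b))" for b
  define f where "f b a = (if JB b > 0 then J (a, b) / JB b else pmf p0 a)" for b a
  have fnn: "f b a \<ge> 0" for b a using Jnn by (simp add: f_def)
  have fsum: "(\<Sum>a\<in>UNIV. f b a) = 1" for b
  proof (cases "JB b > 0")
    case True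
    then have "(\<Sum>a\<in>UNIV. f b a) = (\<Sum>a\<in>UNIV. J (a, b)) / JB b"
      by (simp add: f_def sum_divide_distrib)
    then show ?thesis using True by (simp add: JB_def)
  next
    case False
    then show ?thesis by (simp add: f_def sum_pmf_eq_1)
  qed
  have fprob: "(\<integral>\<^sup>+x. ennreal (f b x) \<partial>count_space UNIV) = 1" for b
    using fsum[of b] fnn by (simp add: nn_integral_count_space_finite)
  define V where "V b = embed_pmf (f b)" for b
  have pmfV: "pmf (V b) a = f b a" for b a
    unfolding V_def by (rule pmf_embed_pmf[OF fnn fprob])
  define G where "G = g ` {..<i}"
  define p' where "p' s = (if s \<in> G then V (ws ! the_inv_into {..<i} g s) else p s)" for s
  have p'g: "p' (g t) = V (ws ! t)" if "t < i" for t
    using that inj by (simp add: p'_def G_def the_inv_into_f_f)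
  have finS: "finite (set_pmf (Pi_pmf S d p))"
    by (rule finite_subset[OF set_Pi_pmf_subset']) (use S in auto)
  let ?E = "{Z. emp (zip (map (Z \<circ> g) [0..<i]) ws) = J}"
  have key: "pmf (Pi_pmf S d p) Z = exp (- real i * Dc p0 J) * pmf (Pi_pmf S d p') Z"
    if Z: "Z \<in> ?E \<inter> set_pmf (Pi_pmf S d p)" for Z
  proof -
    have ext: "\<And>x. x \<notin> S \<Longrightarrow> Z x = d"
      using Z set_Pi_pmf_subset[OF S, of d p] by auto
    have GS: "G \<subseteq> S" using gS by (simp add: G_def)
    have split: "(\<Prod>x\<in>S. h x) = (\<Prod>x\<in>S - G. h x) * (\<Prod>t<i. h (g t))" for h :: "'s \<Rightarrow> real"
    proof -
      have "(\<Prod>x\<in>S. h x) = (\<Prod>x\<in>S - G. h x) * (\<Prod>x\<in>G. h x)"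
        by (rule prod.subset_diff[OF GS S])
      also have "(\<Prod>x\<in>G. h x) = (\<Prod>t<i. h (g t))"
        unfolding G_def by (rule prod.reindex[OF inj, unfolded comp_def])
      finally show ?thesis .
    qed
    define zs where "zs = zip (map (Z \<circ> g) [0..<i]) ws"
    have Jzs: "J = emp zs" using Z by (simp add: zs_def)
    have lzs: "length zs = i" using len by (simp add: zs_def)
    have zst: "zs ! t = (Z (g t), ws ! t)" if "t < i" for t
      using that len by (simp add: zs_def)
    have Jpos: "J (Z (g t), ws ! t) > 0" if "t < i" for t
    proof -
      have "zs ! t \<in> set zs" using that lzs by simp
      then show ?thesis using Jzs zst[OF that] emp_pos by metis
    qed
    have JBpos: "JB (ws ! t) > 0" if "t < i" for t
    proof -
      have "J (Z (g t), ws ! t) \<le> JB (ws ! t)"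
        unfolding JB_def by (rule member_le_sum) (use Jnn in auto)
      with Jpos[OF that] show ?thesis by simp
    qed
    define h where "h z = ln (J z / (JB (snd z) * pmf p0 (fst z)))" for z
    have pt: "pmf p0 (Z (g t)) = exp (- h (zs ! t)) * pmf (V (ws ! t)) (Z (g t))" if "t < i" for t
    proof -
      have p0p: "pmf p0 (Z (g t)) > 0" using pos[OF Jpos[OF that]] by simp
      have "exp (- h (zs ! t)) = JB (ws ! t) * pmf p0 (Z (g t)) / J (Z (g t), ws ! t)"
        using Jpos[OF that] JBpos[OF that] p0p
        by (simp add: h_def zst[OF that] exp_minus ln_div ln_mult exp_diff exp_add)
      then show ?thesis using Jpos[OF that] JBpos[OF that]
        by (simp add: pmfV f_def)
    qed
    have prodp: "(\<Prod>t<i. pmf p0 (Z (g t))) = exp (- (\<Sum>t<i. h (zs ! t))) * (\<Prod>t<i. pmf (V (ws ! t)) (Z (g t)))"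
    proof -
      have "(\<Prod>t<i. pmf p0 (Z (g t))) = (\<Prod>t<i. exp (- h (zs ! t)) * pmf (V (ws ! t)) (Z (g t)))"
        by (rule prod.cong) (simp_all add: pt)
      also have "\<dots> = (\<Prod>t<i. exp (- h (zs ! t))) * (\<Prod>t<i. pmf (V (ws ! t)) (Z (g t)))"
        by (rule prod.distrib)
      also have "(\<Prod>t<i. exp (- h (zs ! t))) = exp (\<Sum>t<i. - h (zs ! t))"
        by (rule exp_sum[symmetric]) simp
      finally show ?thesis by (simp add: sum_negf)
    qed
    have sumh: "(\<Sum>t<i. h (zs ! t)) = real i * Dc p0 J"
    proof -
      have "(\<Sum>t<i. h (zs ! t)) = sum_list (map h zs)"
        using lzs by (simp add: sum_list_sum_nth atLeast0LessThan)
      also have "\<dots> = (\<Sum>z\<in>UNIV. real (count_list zs z) * h z)"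
        by (rule sum_list_count_real)
      also have "\<dots> = (\<Sum>z\<in>UNIV. real i * (if J z > 0 then J z * h z else 0))"
      proof (rule sum.cong[OF refl])
        fix z
        have c: "real (count_list zs z) = real i * J z"
          using emp_count[OF lzs ipos] Jzs by simp
        show "real (count_list zs z) * h z = real i * (if J z > 0 then J z * h z else 0)"
          using c Jnn[of z] by auto
      qed
      also have "\<dots> = real i * Dc p0 J"
        unfolding Dc_def h_def JB_def by (simp add: sum_distrib_left)
      finally show ?thesis .
    qed
    have "pmf (Pi_pmf S d p) Z = (\<Prod>x\<in>S. pmf (p x) (Z x))"
      using S ext by (simp add: pmf_Pi')
    also have "\<dots> = (\<Prod>x\<in>S - G. pmf (p x) (Z x)) * (\<Prod>t<i. pmf p0 (Z (g t)))"
      by (simp add: split pg)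
    also have "\<dots> = exp (- real i * Dc p0 J) *
        ((\<Prod>x\<in>S - G. pmf (p' x) (Z x)) * (\<Prod>t<i. pmf (p' (g t)) (Z (g t))))"
    proof -
      have "(\<Prod>x\<in>S - G. pmf (p x) (Z x)) = (\<Prod>x\<in>S - G. pmf (p' x) (Z x))"
        by (rule prod.cong) (auto simp: p'_def)
      moreover have "(\<Prod>t<i. pmf (V (ws ! t)) (Z (g t))) = (\<Prod>t<i. pmf (p' (g t)) (Z (g t)))"
        by (rule prod.cong) (auto simp: p'g)
      ultimately show ?thesis using prodp sumh by simp
    qed
    also have "(\<Prod>x\<in>S - G. pmf (p' x) (Z x)) * (\<Prod>t<i. pmf (p' (g t)) (Z (g t)))
               = pmf (Pi_pmf S d p') Z"
      using S ext by (simp add: pmf_Pi' split)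
    finally show ?thesis .
  qed
  have "measure_pmf.prob (Pi_pmf S d p) ?E = measure_pmf.prob (Pi_pmf S d p) (?E \<inter> set_pmf (Pi_pmf S d p))"
    by (simp add: measure_Int_set_pmf)
  also have "\<dots> = (\<Sum>Z\<in>?E \<inter> set_pmf (Pi_pmf S d p). pmf (Pi_pmf S d p) Z)"
    using finS by (simp add: measure_measure_pmf_finite)
  also have "\<dots> = (\<Sum>Z\<in>?E \<inter> set_pmf (Pi_pmf S d p). exp (- real i * Dc p0 J) * pmf (Pi_pmf S d p') Z)"
    by (rule sum.cong[OF refl]) (rule key)
  also have "\<dots> = exp (- real i * Dc p0 J) * measure_pmf.prob (Pi_pmf S d p') (?E \<inter> set_pmf (Pi_pmf S d p))"
    using finS by (simp add: measure_measure_pmf_finite sum_distrib_left)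
  also have "\<dots> \<le> exp (- real i * Dc p0 J) * 1"
    by (rule mult_left_mono) simp_all
  finally show ?thesis by simp
qed



lemma sum_UNIV_pair:
  fixes F :: "'a::finite \<times> 'b::finite \<Rightarrow> real"
  shows "(\<Sum>z\<in>UNIV. F z) = (\<Sum>a\<in>UNIV. \<Sum>b\<in>UNIV. F (a, b))"
  by (simp add: UNIV_Times_UNIV[symmetric] sum.cartesian_product del: UNIV_Times_UNIV)

lemma mi_le_Dc:
  fixes J :: "'a::finite \<times> 'b::finite \<Rightarrow> real"
  assumes nn: "\<And>z. J z \<ge> 0" and sum1: "(\<Sum>z\<in>UNIV. J z) = 1"
    and pos: "\<And>z. J z > 0 \<Longrightarrow> pmf p0 (fst z) > 0"
  shows "mutual_info J \<le> Dc p0 J"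
proof -
  define JA where "JA a = (\<Sum>y\<in>UNIV. J (a, y))" for a
  define JB where "JB b = (\<Sum>x\<in>UNIV. J (x, b))" for b
  have JAge: "J (a, b) \<le> JA a" for a b
    unfolding JA_def by (rule member_le_sum) (use nn in auto)
  have JBge: "J (a, b) \<le> JB b" for a b
    unfolding JB_def by (rule member_le_sum) (use nn in auto)
  have Dc2: "Dc p0 J = (\<Sum>a\<in>UNIV. \<Sum>b\<in>UNIV. if J (a, b) > 0 then J (a, b) * ln (J (a, b) / (JB b * pmf p0 a)) else 0)"
    unfolding Dc_def JB_def by (subst sum_UNIV_pair) (simp only: fst_conv snd_conv)
  have "Dc p0 J - mutual_info J = (\<Sum>a\<in>UNIV. \<Sum>b\<in>UNIV. J (a, b) * ln (JA a / pmf p0 a))"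
  proof -
    have "Dc p0 J - mutual_info J = (\<Sum>a\<in>UNIV. \<Sum>b\<in>UNIV.
         (if J (a, b) > 0 then J (a, b) * ln (J (a, b) / (JB b * pmf p0 a)) else 0)
       - (if J (a, b) > 0 then J (a, b) * ln (J (a, b) / (JA a * JB b)) else 0))"
      unfolding Dc2 mutual_info_def JA_def JB_def by (simp add: sum_subtractf)
    also have "\<dots> = (\<Sum>a\<in>UNIV. \<Sum>b\<in>UNIV. J (a, b) * ln (JA a / pmf p0 a))"
    proof (intro sum.cong refl)
      fix a b
      show "(if J (a, b) > 0 then J (a, b) * ln (J (a, b) / (JB b * pmf p0 a)) else 0)
         - (if J (a, b) > 0 then J (a, b) * ln (J (a, b) / (JA a * JB b)) else 0)
         = J (a, b) * ln (JA a / pmf p0 a)"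
      proof (cases "J (a, b) > 0")
        case True
        have p: "pmf p0 a > 0" using pos[OF True] by simp
        have A: "JA a > 0" using JAge[of a b] True by simp
        have B: "JB b > 0" using JBge[of a b] True by simp
        show ?thesis using True p A B
          by (simp add: ln_div ln_mult algebra_simps)
      next
        case False
        then have "J (a, b) = 0" using nn[of "(a, b)"] by simp
        then show ?thesis by simp
      qed
    qed
    finally show ?thesis .
  qed
  also have "\<dots> = (\<Sum>a\<in>UNIV. JA a * ln (JA a / pmf p0 a))"
    by (simp add: JA_def sum_distrib_right)
  also have "\<dots> \<ge> (\<Sum>a\<in>UNIV. JA a - pmf p0 a)"
  proof (rule sum_mono)
    fix a
    show "JA a - pmf p0 a \<le> JA a * ln (JA a / pmf p0 a)"
    proof (cases "JA a > 0")
      case True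
      then obtain b where "J (a, b) \<noteq> 0"
        unfolding JA_def by (metis (no_types, lifting) less_irrefl sum.neutral)
      then have "J (a, b) > 0" using nn[of "(a,b)"] by simp
      then have p: "pmf p0 a > 0" using pos by fastforce
      have "ln (pmf p0 a / JA a) \<le> pmf p0 a / JA a - 1"
        by (rule ln_le_minus_one) (use p True in simp)
      then have "- ln (JA a / pmf p0 a) \<le> pmf p0 a / JA a - 1"
        using p True by (simp add: ln_div)
      then have "JA a * (- ln (JA a / pmf p0 a)) \<le> JA a * (pmf p0 a / JA a - 1)"
        using True by (intro mult_left_mono) auto
      then show ?thesis using True by (simp add: algebra_simps)
    next
      case False
      then have "JA a = 0" using nn unfolding JA_def by (metis sum_nonneg order.antisym not_less)
      then show ?thesis by simp
    qed
  qed
  also have "(\<Sum>a\<in>UNIV. JA a - pmf p0 a) = 0"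
  proof -
    have "(\<Sum>a\<in>UNIV. JA a) = 1"
      using sum1 unfolding JA_def by (subst (asm) sum_UNIV_pair) simp
    moreover have "(\<Sum>a\<in>UNIV. pmf p0 a) = 1" by (simp add: sum_pmf_eq_1)
    ultimately show ?thesis by (simp add: sum_subtractf)
  qed
  finally show ?thesis by simp
qed



definition Ty :: "nat \<Rightarrow> ('z \<Rightarrow> real) set" where
  "Ty i = {J. \<exists>zs. length zs = i \<and> J = emp zs}"

lemma Ty_finite: "finite (Ty i :: ('z::finite \<Rightarrow> real) set)"
  and Ty_card: "card (Ty i :: ('z::finite \<Rightarrow> real) set) \<le> (i + 1) ^ CARD('z)"
proof -
  have sub: "(Ty i :: ('z \<Rightarrow> real) set) \<subseteq> (\<lambda>k z. real (k z) / real i) ` (PiE UNIV (\<lambda>_. {..i}))"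
    unfolding Ty_def using emp_types by blast
  have fin: "finite ((\<lambda>k z. real (k z) / real i) ` (PiE (UNIV::'z set) (\<lambda>_. {..i})))"
    by (simp add: finite_PiE)
  show "finite (Ty i :: ('z::finite \<Rightarrow> real) set)" using finite_subset[OF sub fin] .
  have "card (Ty i :: ('z \<Rightarrow> real) set) \<le> card ((\<lambda>k z. real (k z) / real i) ` (PiE (UNIV::'z set) (\<lambda>_. {..i})))"
    by (rule card_mono[OF fin sub])
  also have "\<dots> \<le> (i + 1) ^ CARD('z)" by (rule card_types)
  finally show "card (Ty i :: ('z::finite \<Rightarrow> real) set) \<le> (i + 1) ^ CARD('z)" .
qed

lemma emp_sum1:
  fixes zs :: "'z::finite list"
  assumes "length zs > 0"
  shows "(\<Sum>z\<in>UNIV. emp zs z) = 1"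
proof -
  have "real (length zs) = (\<Sum>z\<in>UNIV. real (count_list zs z))"
    using sum_list_count_real[of "\<lambda>_. 1" zs] by (simp add: sum_list_triv)
  have "(\<Sum>z\<in>UNIV. emp zs z) = (\<Sum>z\<in>UNIV. real (count_list zs z)) / real (length zs)"
    by (simp add: emp_def count_list_filter sum_divide_distrib)
  also have "\<dots> = 1" using \<open>real (length zs) = _\<close>[symmetric] assms by simp
  finally show ?thesis .
qed

lemma mi_bound:
  fixes p :: "'s \<Rightarrow> 'a::finite pmf" and ws :: "'b::finite list" and g :: "nat \<Rightarrow> 's"
  assumes S: "finite S" and inj: "inj_on g {..<i}" and gS: "g ` {..<i} \<subseteq> S"
    and pg: "\<And>t. t < i \<Longrightarrow> p (g t) = p0" and len: "length ws = i" and ipos: "i > 0"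
  shows "measure_pmf.prob (Pi_pmf S d p)
           {Z. a \<le> real i * mutual_info (emp (zip (map (Z \<circ> g) [0..<i]) ws))}
         \<le> real ((i + 1) ^ CARD('a \<times> 'b)) * exp (- a)"
proof (rule union_types[where st = "\<lambda>Z. emp (zip (map (Z \<circ> g) [0..<i]) ws)"
      and \<Phi> = "\<lambda>J. a \<le> real i * mutual_info J"])
  show "emp (zip (map (Z \<circ> g) [0..<i]) ws) \<in> Ty i" for Z :: "'s \<Rightarrow> 'a" unfolding Ty_def using len by (intro CollectI exI[of _ "zip (map (Z \<circ> g) [0..<i]) ws"]) simp
  show "finite (Ty i :: ('a \<times> 'b \<Rightarrow> real) set)" by (rule Ty_finite)
  show "card (Ty i :: ('a \<times> 'b \<Rightarrow> real) set) \<le> (i + 1) ^ CARD('a \<times> 'b)" by (rule Ty_card)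
  show "exp (- a) \<ge> 0" by simp
  fix J :: "'a \<times> 'b \<Rightarrow> real"
  assume J: "J \<in> Ty i" and phi: "a \<le> real i * mutual_info J"
  show "measure_pmf.prob (Pi_pmf S d p) {Z. emp (zip (map (Z \<circ> g) [0..<i]) ws) = J} \<le> exp (- a)"
  proof (cases "\<exists>z. J z > 0 \<and> pmf p0 (fst z) = 0")
    case True
    then obtain z where "J z > 0" "pmf p0 (fst z) = 0" by blast
    then show ?thesis using core_zero[where p=p and g=g and S=S and ws=ws and i=i and pz=p0 and d=d, OF pg gS S len] by simp
  next
    case False
    then have pos: "\<And>z. J z > 0 \<Longrightarrow> pmf p0 (fst z) > 0"
      by (metis pmf_nonneg order_le_less)
    from J obtain zs where zs: "length zs = i" "J = emp zs" unfolding Ty_def by blast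
    have "mutual_info J \<le> Dc p0 J"
      by (rule mi_le_Dc) (use zs emp_nonneg emp_sum1 ipos pos in auto)
    then have "a \<le> real i * Dc p0 J" using phi by (meson mult_left_mono of_nat_0_le_iff order_trans)
    then have "exp (- real i * Dc p0 J) \<le> exp (- a)" by simp
    moreover have "measure_pmf.prob (Pi_pmf S d p) {Z. emp (zip (map (Z \<circ> g) [0..<i]) ws) = J}
         \<le> exp (- real i * Dc p0 J)"
      by (rule core_pos[where p=p and g=g and S=S and i=i and ws=ws, OF S inj gS pg len pos ipos])
    ultimately show ?thesis by linarith
  qed
qed

lemma emp_unit:
  "emp (zip xs (replicate (length xs) ())) (a, ()) = emp xs a"
proof -
  have "zip xs (replicate (length xs) ()) = map (\<lambda>x. (x, ())) xs"
    by (induction xs) auto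
  then show ?thesis by (simp add: emp_def filter_map comp_def)
qed

lemma kl_bound:
  fixes p :: "'s \<Rightarrow> 'a::finite pmf" and g :: "nat \<Rightarrow> 's"
  assumes S: "finite S" and inj: "inj_on g {..<i}" and gS: "g ` {..<i} \<subseteq> S"
    and pg: "\<And>t. t < i \<Longrightarrow> p (g t) = q0" and ipos: "i > 0"
  shows "measure_pmf.prob (Pi_pmf S d p)
           {Z. ereal b \<le> ereal (real i) * KL_div (emp (map (Z \<circ> g) [0..<i])) (pmf q0)}
         \<le> real ((i + 1) ^ CARD('a \<times> unit)) * exp (- b)"
proof -
  let ?ws = "replicate i ()"
  let ?st = "\<lambda>Z. emp (zip (map (Z \<circ> g) [0..<i]) ?ws)"
  let ?\<Phi> = "\<lambda>J. ereal b \<le> ereal (real i) * KL_div (\<lambda>a. J (a, ())) (pmf q0)"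
  have eq: "emp (map (Z \<circ> g) [0..<i]) = (\<lambda>a. ?st Z (a, ()))" for Z
    using emp_unit[of "map (Z \<circ> g) [0..<i]"] by auto
  have "measure_pmf.prob (Pi_pmf S d p) {Z. ?\<Phi> (?st Z)} \<le> real ((i + 1) ^ CARD('a \<times> unit)) * exp (- b)"
  proof (rule union_types[where st = ?st and \<Phi> = ?\<Phi>])
    show "?st Z \<in> Ty i" for Z :: "'s \<Rightarrow> 'a" unfolding Ty_def
      by (intro CollectI exI[of _ "zip (map (Z \<circ> g) [0..<i]) ?ws"]) simp
    show "finite (Ty i :: ('a \<times> unit \<Rightarrow> real) set)" by (rule Ty_finite)
    show "card (Ty i :: ('a \<times> unit \<Rightarrow> real) set) \<le> (i + 1) ^ CARD('a \<times> unit)" by (rule Ty_card)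
    show "exp (- b) \<ge> 0" by simp
    fix J :: "'a \<times> unit \<Rightarrow> real"
    assume J: "J \<in> Ty i" and phi: "?\<Phi> J"
    show "measure_pmf.prob (Pi_pmf S d p) {Z. ?st Z = J} \<le> exp (- b)"
    proof (cases "\<exists>z. J z > 0 \<and> pmf q0 (fst z) = 0")
      case True
      then obtain z where "J z > 0" "pmf q0 (fst z) = 0" by blast
      then show ?thesis using core_zero[where p=p and g=g and S=S and ws="?ws" and i=i and pz=q0 and d=d, OF pg gS S] by simp
    next
      case False
      then have pos: "\<And>z. J z > 0 \<Longrightarrow> pmf q0 (fst z) > 0"
        by (metis pmf_nonneg order_le_less)
      from J obtain zs where zs: "length zs = i" "J = emp zs" unfolding Ty_def by blast
      have s1: "(\<Sum>a\<in>UNIV. J (a, ())) = 1"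
      proof -
        have "(\<Sum>z\<in>UNIV. J z) = 1" using emp_sum1[of zs] zs ipos by simp
        then show ?thesis using sum_UNIV_pair[of J] by (simp add: UNIV_unit)
      qed
      have KL: "KL_div (\<lambda>a. J (a, ())) (pmf q0) = ereal (Dc q0 J)"
      proof -
        have "\<forall>a. J (a, ()) > 0 \<longrightarrow> pmf q0 a > 0" using pos by fastforce
        then have "KL_div (\<lambda>a. J (a, ())) (pmf q0)
           = ereal (\<Sum>a\<in>UNIV. if J (a, ()) > 0 then J (a, ()) * ln (J (a, ()) / pmf q0 a) else 0)"
          by (simp add: KL_div_def)
        also have "(\<Sum>a\<in>UNIV. if J (a, ()) > 0 then J (a, ()) * ln (J (a, ()) / pmf q0 a) else 0) = Dc q0 J"
          unfolding Dc_def by (subst sum_UNIV_pair) (simp only: fst_conv snd_conv UNIV_unit s1 sum.insert sum.empty finite.emptyI empty_iff not_False_eq_True if_True mult_1_left add_0_right)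
        finally show ?thesis .
      qed
      from phi have "b \<le> real i * Dc q0 J" by (simp add: KL)
      then have "exp (- real i * Dc q0 J) \<le> exp (- b)" by simp
      moreover have "measure_pmf.prob (Pi_pmf S d p) {Z. ?st Z = J} \<le> exp (- real i * Dc q0 J)"
        apply (rule core_pos[where ws="?ws"])
        using S inj gS pg pos ipos by auto
      ultimately show ?thesis by linarith
    qed
  qed
  then show ?thesis by (simp add: eq)
qed



definition merge :: "(nat \<times> nat) set \<Rightarrow> (nat \<times> nat \<Rightarrow> 'x) \<Rightarrow> (nat \<times> nat \<Rightarrow> 'x) \<Rightarrow> nat \<times> nat \<Rightarrow> 'x" where
  "merge R2 g f = (\<lambda>x. if x \<in> R2 then g x else f x)"

lemma outputs_merge:
  assumes "\<And>j. (m, j) \<notin> R2"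
  shows "outputs_pmf Q star N T (merge R2 g f) m l = outputs_pmf Q star N T f m l"
proof -
  show ?thesis unfolding outputs_pmf_def merge_def using assms by (intro Pi_pmf_cong) auto
qed

lemma joint_decomp:
  fixes M N m m' :: nat and P :: "'x pmf"
  assumes "m \<noteq> m'" "m' \<in> {1..M}"
  defines "R2 \<equiv> {m'} \<times> {1..N}"
  defines "G \<equiv> Pi_pmf R2 undefined (\<lambda>_. P)"
  defines "F \<equiv> Pi_pmf ({1..M} \<times> {1..N} - R2) undefined (\<lambda>_. P)"
  shows "joint_pmf P Q star M N A m l =
     bind_pmf F (\<lambda>f. bind_pmf (outputs_pmf Q star N (A + N - 1) f m l)
        (\<lambda>y. map_pmf (\<lambda>g. (merge R2 g f, y)) G))"
proof -
  have R: "{1..M} \<times> {1..N} = R2 \<union> ({1..M} \<times> {1..N} - R2)"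
    using assms(2) unfolding R2_def by auto
  have cb: "codebook_pmf P M N = map_pmf (\<lambda>(g, f). merge R2 g f) (pair_pmf G F)"
    unfolding codebook_pmf_def G_def F_def merge_def
    by (subst R, subst Pi_pmf_union) (auto simp: case_prod_beta R2_def)
  have om: "outputs_pmf Q star N T (merge R2 g f) m l = outputs_pmf Q star N T f m l" for g f T
    by (rule outputs_merge) (use assms(1) in \<open>auto simp: R2_def\<close>)
  show ?thesis
    unfolding joint_pmf_def cb
    apply (simp add: map_pmf_def bind_assoc_pmf bind_return_pmf pair_pmf_def om)
    apply (subst bind_commute_pmf)
    apply (rule bind_pmf_cong[OF refl])
    apply (subst bind_commute_pmf)
    apply simp
    done
qed



lemma seg_shift: "seg f a i = map (\<lambda>t. f (a + t)) [0..<i]"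
  by (induction i) (auto simp: seg_def)

lemma term_bound:
  fixes P :: "'x::finite pmf" and Q :: "'x \<Rightarrow> 'y::finite pmf"
  assumes m': "m' \<in> {1..M}" "m \<noteq> m'" and i: "1 \<le> i" "i \<le> N" "i \<le> n" and n: "n \<le> A + N - 1"
  shows "measure_pmf.prob (joint_pmf P Q star M N A m l) {(c, y). E_all Q star M t1 t2 m' n i c y}
    \<le> real ((i + 1) ^ CARD('x \<times> 'y)) * exp (- (t2 * ln (real M))) *
       (if n < l \<or> l + N \<le> n - i + 1 then real ((i + 1) ^ CARD('y \<times> unit)) * exp (- (t1 * ln (real M))) else 1)"
proof -
  define s where "s = n - i + 1"
  define R2 where "R2 = {m'} \<times> {1..N}"
  define G where "G = Pi_pmf R2 undefined (\<lambda>_. P)"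
  define F where "F = Pi_pmf ({1..M} \<times> {1..N} - R2) undefined (\<lambda>_. P)"
  define T where "T = A + N - 1"
  define BMI where "BMI = real ((i + 1) ^ CARD('x \<times> 'y)) * exp (- (t2 * ln (real M)))"
  define BKL where "BKL = real ((i + 1) ^ CARD('y \<times> unit)) * exp (- (t1 * ln (real M)))"
  define MIset where "MIset = {(c :: nat \<times> nat \<Rightarrow> 'x, y :: nat \<Rightarrow> 'y).
      t2 * ln (real M) \<le> real i * mutual_info (emp (zip (map (\<lambda>t. c (m', 1 + t)) [0..<i]) (seg y s i)))}"
  define KLev where "KLev = (\<lambda>y :: nat \<Rightarrow> 'y.
      ereal (t1 * ln (real M)) \<le> ereal (real i) * KL_div (emp (seg y s i)) (pmf (Q star)))"
  have BMI0: "BMI \<ge> 0" and BKL0: "BKL \<ge> 0" by (simp_all add: BMI_def BKL_def)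
  have J: "joint_pmf P Q star M N A m l = bind_pmf F (\<lambda>f. bind_pmf (outputs_pmf Q star N T f m l)
        (\<lambda>y. map_pmf (\<lambda>g. (merge R2 g f, y)) G))"
    unfolding F_def G_def R2_def T_def by (rule joint_decomp[OF m'(2) m'(1)])
  have sub: "{(c, y). E_all Q star M t1 t2 m' n i c y} \<subseteq> MIset \<inter> {(c, y). KLev y}"
  proof safe
    fix c y assume E: "E_all Q star M t1 t2 m' n i c y"
    then have Ek: "E_k Q star M t1 t2 m' n i i c y" using i unfolding E_all_def by auto
    have "seg (\<lambda>j. c (m', j)) 1 i = map (\<lambda>t. c (m', 1 + t)) [0..<i]" by (simp add: seg_shift)
    then show "(c, y) \<in> MIset" "KLev y" using Ek unfolding E_k_def MIset_def KLev_def s_def by auto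
  qed
  have MIb: "measure_pmf.prob (map_pmf (\<lambda>g. (merge R2 g f, y)) G) MIset \<le> BMI" for f y
  proof -
    define gg where "gg t = (m', 1 + t)" for t :: nat
    have pre: "(\<lambda>g. (merge R2 g f, y)) -` MIset = {Z. t2 * ln (real M) \<le> real i *
          mutual_info (emp (zip (map (Z \<circ> gg) [0..<i]) (seg y s i)))}"
    proof -
      have meq: "map (\<lambda>t. merge R2 Z f (m', Suc t)) [0..<i] = map (Z \<circ> gg) [0..<i]" for Z
        by (rule map_cong[OF refl]) (use i in \<open>auto simp: merge_def R2_def gg_def\<close>)
      show ?thesis unfolding MIset_def by (auto simp: meq)
    qed
    have "measure_pmf.prob G {Z. t2 * ln (real M) \<le> real i *
          mutual_info (emp (zip (map (Z \<circ> gg) [0..<i]) (seg y s i)))} \<le> BMI"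
      unfolding G_def BMI_def
      by (rule mi_bound) (use i in \<open>auto simp: R2_def gg_def inj_on_def seg_def\<close>)
    then show ?thesis by (simp add: measure_map_pmf pre)
  qed
  show ?thesis
  proof (cases "n < l \<or> l + N \<le> n - i + 1")
    case False
    have hMI: "measure_pmf.prob (joint_pmf P Q star M N A m l) (MIset \<inter> {(c, y). KLev y}) \<le> BMI"
      unfolding J
    proof (rule bind_le1[OF _ BMI0], rule bind_le1[OF _ BMI0])
      fix f y
      show "measure_pmf.prob (map_pmf (\<lambda>g. (merge R2 g f, y)) G) (MIset \<inter> {(c, y). KLev y}) \<le> BMI"
        by (rule order_trans[OF measure_pmf.finite_measure_mono MIb]) auto
    qed
    have "measure_pmf.prob (joint_pmf P Q star M N A m l) {(c, y). E_all Q star M t1 t2 m' n i c y} \<le> BMI"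
      by (rule order_trans[OF measure_pmf.finite_measure_mono[OF sub] hMI]) simp
    then show ?thesis using False by (simp add: BMI_def)
  next
    case True
    have KLb: "measure_pmf.prob (outputs_pmf Q star N T f m l) {y. KLev y} \<le> BKL" for f
    proof -
      define gy where "gy t = s + t" for t :: nat
      have eq: "{y. KLev y} = {y. ereal (t1 * ln (real M)) \<le> ereal (real i) *
                   KL_div (emp (map (y \<circ> gy) [0..<i])) (pmf (Q star))}"
        unfolding KLev_def gy_def by (simp add: seg_shift comp_def)
      show ?thesis unfolding eq outputs_pmf_def BKL_def
        by (rule kl_bound) (use i n True in \<open>auto simp: gy_def s_def T_def inj_on_def\<close>)
    qed
    have hMI: "measure_pmf.prob (joint_pmf P Q star M N A m l) (MIset \<inter> {(c, y). KLev y}) \<le> BMI * BKL"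
      unfolding J
    proof (rule bind_le1, rule order_trans[OF bind_le[where T = "{y. KLev y}"]])
      fix f assume "f \<in> set_pmf F"
      show "BMI * measure_pmf.prob (outputs_pmf Q star N T f m l) {y. KLev y} \<le> BMI * BKL"
        by (rule mult_left_mono[OF KLb BMI0])
      fix y
      show "measure_pmf.prob (map_pmf (\<lambda>g. (merge R2 g f, y)) G) (MIset \<inter> {(c, y). KLev y})
              \<le> BMI * indicator {y. KLev y} y"
      proof (cases "KLev y")
        case True
        then show ?thesis
        proof -
          have "measure_pmf.prob (map_pmf (\<lambda>g. (merge R2 g f, y)) G) (MIset \<inter> {(c, y). KLev y}) \<le> BMI"
            by (rule order_trans[OF measure_pmf.finite_measure_mono MIb]) auto
          then show ?thesis using True by simp
        qed
      next
        case False
        then have "(\<lambda>g. (merge R2 g f, y)) -` (MIset \<inter> {(c, y). KLev y}) = {}" by auto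
        then show ?thesis using False by (simp add: measure_map_pmf)
      qed
    next
      show "BMI \<ge> 0" by (rule BMI0)
    next
      show "BMI * BKL \<ge> 0" using BMI0 BKL0 by simp
    qed
    have "measure_pmf.prob (joint_pmf P Q star M N A m l) {(c, y). E_all Q star M t1 t2 m' n i c y} \<le> BMI * BKL"
      by (rule order_trans[OF measure_pmf.finite_measure_mono[OF sub] hMI]) simp
    then show ?thesis using True by (simp add: BMI_def BKL_def)
  qed
qed



lemma main_bound:
  fixes P :: "'x::finite pmf" and Q :: "'x \<Rightarrow> 'y::finite pmf"
  assumes m: "m \<in> {1..M}" and A: "A \<ge> 1" and l: "l \<in> {1..A}"
  shows "(\<Sum>m'\<in>{1..M} - {m}. \<Sum>n=1..A + N - 1. \<Sum>i=1..min N n.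
        measure_pmf.prob (joint_pmf P Q star M N A m l)
          {(c, y). E_all Q star M t1 t2 m' n i c y})
     \<le> (real M powr (-(t1 + t2 - 1)) * real A + real M powr (-(t2 - 1))) *
        (2 * (real N + 1) ^ (CARD('x \<times> 'y) + CARD('y \<times> unit) + 2))"
proof -
  define KX where "KX = CARD('x \<times> 'y)"
  define KY where "KY = CARD('y \<times> unit)"
  define e1 where "e1 = exp (- (t1 * ln (real M)))"
  define e2 where "e2 = exp (- (t2 * ln (real M)))"
  define U where "U = (real N + 1) ^ (KX + KY)"
  define T where "T = A + N - 1"
  define W where "W = {l..l + 2 * N}"
  define b where "b n = U * e2 * e1 + U * e2 * indicator W n" for n
  have M1: "real M \<ge> 1" using m by auto
  have e1p: "e1 \<ge> 0" and e2p: "e2 \<ge> 0" by (simp_all add: e1_def e2_def)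
  have U1: "U \<ge> 1" by (simp add: U_def)
  have bnn: "b n \<ge> 0" for n using e1p e2p U1 by (simp add: b_def)
  have step_a: "measure_pmf.prob (joint_pmf P Q star M N A m l) {(c, y). E_all Q star M t1 t2 m' n i c y} \<le> b n"
    if m': "m' \<in> {1..M} - {m}" and n: "n \<in> {1..T}" and i: "i \<in> {1..min N n}" for m' n i
  proof -
    have tb: "measure_pmf.prob (joint_pmf P Q star M N A m l) {(c, y). E_all Q star M t1 t2 m' n i c y}
      \<le> real ((i + 1) ^ KX) * e2 *
        (if n < l \<or> l + N \<le> n - i + 1 then real ((i + 1) ^ KY) * e1 else 1)"
      unfolding KX_def KY_def e1_def e2_def
      by (rule term_bound) (use m' n i in \<open>auto simp: T_def\<close>)
    have iN: "real i + 1 \<le> real N + 1" using i by auto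
    have pX: "real ((i + 1) ^ KX) \<le> (real N + 1) ^ KX"
      using power_mono[OF iN, of KX] by (simp add: add.commute)
    have pY: "real ((i + 1) ^ KY) \<le> (real N + 1) ^ KY"
      using power_mono[OF iN, of KY] by (simp add: add.commute)
    have pY1: "(real N + 1) ^ KY \<ge> 1" by simp
    have UXY: "U = (real N + 1) ^ KX * (real N + 1) ^ KY" by (simp add: U_def power_add)
    show ?thesis
    proof (cases "n < l \<or> l + N \<le> n - i + 1")
      case True
      have "real ((i + 1) ^ KX) * e2 * (real ((i + 1) ^ KY) * e1)
          \<le> (real N + 1) ^ KX * e2 * ((real N + 1) ^ KY * e1)"
        by (intro mult_mono pX pY mult_nonneg_nonneg e1p e2p) simp_all
      also have "\<dots> = U * e2 * e1" by (simp add: UXY)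
      also have "\<dots> \<le> b n" using e1p e2p U1 by (simp add: b_def)
      finally show ?thesis using tb True by simp
    next
      case False
      then have "n \<in> W" using i by (auto simp: W_def)
      have "real ((i + 1) ^ KX) * e2 \<le> (real N + 1) ^ KX * e2"
        by (intro mult_right_mono pX e2p)
      also have "\<dots> \<le> U * e2"
      proof -
        have "(real N + 1) ^ KX * 1 \<le> (real N + 1) ^ KX * (real N + 1) ^ KY"
          by (intro mult_left_mono pY1) simp
        then show ?thesis using e2p by (simp add: UXY mult_right_mono)
      qed
      also have "\<dots> \<le> b n" using \<open>n \<in> W\<close> e1p e2p U1 by (simp add: b_def)
      finally show ?thesis using tb False by simp
    qed
  qed
  have step_b: "(\<Sum>i=1..min N n. measure_pmf.prob (joint_pmf P Q star M N A m l)
        {(c, y). E_all Q star M t1 t2 m' n i c y}) \<le> real N * b n"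
    if m': "m' \<in> {1..M} - {m}" and n: "n \<in> {1..T}" for m' n
  proof -
    have "(\<Sum>i=1..min N n. measure_pmf.prob (joint_pmf P Q star M N A m l)
        {(c, y). E_all Q star M t1 t2 m' n i c y}) \<le> (\<Sum>i=1..min N n. b n)"
      by (rule sum_mono) (rule step_a[OF m' n])
    also have "\<dots> = real (min N n) * b n" by simp
    also have "\<dots> \<le> real N * b n" by (rule mult_right_mono[OF _ bnn]) simp
    finally show ?thesis .
  qed
  have sumW: "(\<Sum>n=1..T. indicator W n) \<le> real (2 * N + 1)"
  proof -
    have "(\<Sum>n=1..T. indicator W n :: real) = real (card ({1..T} \<inter> W))"
      by (simp add: indicator_def sum.If_cases)
    also have "card ({1..T} \<inter> W) \<le> card W" by (rule card_mono) (auto simp: W_def)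
    then have "real (card ({1..T} \<inter> W)) \<le> real (2 * N + 1)" by (simp add: W_def)
    finally show ?thesis .
  qed
  define Bm where "Bm = real N * (U * e2 * e1) * real T + real N * (U * e2) * real (2 * N + 1)"
  have step_c: "(\<Sum>n=1..T. \<Sum>i=1..min N n. measure_pmf.prob (joint_pmf P Q star M N A m l)
        {(c, y). E_all Q star M t1 t2 m' n i c y}) \<le> Bm"
    if m': "m' \<in> {1..M} - {m}" for m'
  proof -
    have "(\<Sum>n=1..T. \<Sum>i=1..min N n. measure_pmf.prob (joint_pmf P Q star M N A m l)
        {(c, y). E_all Q star M t1 t2 m' n i c y}) \<le> (\<Sum>n=1..T. real N * b n)"
      by (rule sum_mono) (rule step_b[OF m'])
    also have "\<dots> = real N * (U * e2 * e1) * real T + real N * (U * e2) * (\<Sum>n=1..T. indicator W n)"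
      by (simp add: b_def sum.distrib sum_distrib_left algebra_simps)
    also have "\<dots> \<le> Bm"
      unfolding Bm_def using sumW e2p U1
      by (intro add_left_mono mult_left_mono) simp_all
    finally show ?thesis .
  qed
  have Bm0: "Bm \<ge> 0" using e1p e2p U1 by (simp add: Bm_def)
  have step_d: "(\<Sum>m'\<in>{1..M} - {m}. \<Sum>n=1..T. \<Sum>i=1..min N n. measure_pmf.prob (joint_pmf P Q star M N A m l)
        {(c, y). E_all Q star M t1 t2 m' n i c y}) \<le> real M * Bm"
  proof -
    have "(\<Sum>m'\<in>{1..M} - {m}. \<Sum>n=1..T. \<Sum>i=1..min N n. measure_pmf.prob (joint_pmf P Q star M N A m l)
        {(c, y). E_all Q star M t1 t2 m' n i c y}) \<le> (\<Sum>m'\<in>{1..M} - {m}. Bm)"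
      by (rule sum_mono) (rule step_c)
    also have "\<dots> = real (card ({1..M} - {m})) * Bm" by simp
    also have "\<dots> \<le> real M * Bm"
    proof (rule mult_right_mono[OF _ Bm0])
      have "card ({1..M} - {m}) \<le> card {1..M}" by (rule card_mono) auto
      then show "real (card ({1..M} - {m})) \<le> real M" by simp
    qed
    finally show ?thesis .
  qed
  define X1 where "X1 = real M powr (-(t1 + t2 - 1))"
  define X2 where "X2 = real M powr (-(t2 - 1))"
  have Mexp: "exp (ln (real M)) = real M" using M1 by simp
  have X1e: "real M * e2 * e1 = X1"
  proof -
    have "real M * e2 * e1 = exp (ln (real M) + - (t2 * ln (real M)) + - (t1 * ln (real M)))"
      unfolding e1_def e2_def exp_add Mexp ..
    also have "\<dots> = exp ((-(t1 + t2 - 1)) * ln (real M))" by (simp add: algebra_simps)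
    also have "\<dots> = X1" using M1 by (simp add: X1_def powr_def)
    finally show ?thesis .
  qed
  have X2e: "real M * e2 = X2"
  proof -
    have "real M * e2 = exp (ln (real M) + - (t2 * ln (real M)))"
      unfolding e2_def exp_add Mexp ..
    also have "\<dots> = exp ((-(t2 - 1)) * ln (real M))" by (simp add: algebra_simps)
    also have "\<dots> = X2" using M1 by (simp add: X2_def powr_def)
    finally show ?thesis .
  qed
  have X10: "X1 \<ge> 0" and X20: "X2 \<ge> 0" by (simp_all add: X1_def X2_def)
  have NT: "real N * real T \<le> real A * (real N + 1) ^ 2"
  proof -
    have h: "N \<le> A * N" using A by simp
    have "T \<le> A * (N + 1)" unfolding T_def distrib_left mult_1_right using h by linarith
    then have "real T \<le> real (A * (N + 1))" by (simp only: of_nat_le_iff)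
    also have "real (A * (N + 1)) = real A * (real N + 1)" by (simp only: of_nat_mult of_nat_add of_nat_1)
    finally have "real T \<le> real A * (real N + 1)" .
    then have "real N * real T \<le> real N * (real A * (real N + 1))" by (rule mult_left_mono) simp
    also have "\<dots> \<le> real A * (real N + 1) ^ 2" by (simp add: power2_eq_square algebra_simps)
    finally show ?thesis .
  qed
  have N2: "real N * real (2 * N + 1) \<le> 2 * (real N + 1) ^ 2"
    by (simp add: power2_eq_square algebra_simps)
  have "real M * Bm = (real M * e2 * e1) * U * (real N * real T) + (real M * e2) * U * (real N * real (2 * N + 1))"
    unfolding Bm_def by (simp only: algebra_simps)
  also have "\<dots> = X1 * U * (real N * real T) + X2 * U * (real N * real (2 * N + 1))"
    by (simp only: X1e, simp only: X2e)
  also have "\<dots> \<le> X1 * U * (real A * (real N + 1) ^ 2) + X2 * U * (2 * (real N + 1) ^ 2)"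
    using X10 X20 U1 NT N2 by (intro add_mono mult_left_mono) simp_all
  also have "\<dots> \<le> (X1 * real A + X2) * (2 * (real N + 1) ^ (KX + KY + 2))"
  proof -
    define PP where "PP = (real N + 1) ^ (KX + KY + 2)"
    have hP: "U * (real N + 1) ^ 2 = PP" unfolding U_def PP_def by (simp only: power_add)
    have PP0: "PP \<ge> 0" by (simp add: PP_def)
    have e1: "X1 * U * (real A * (real N + 1) ^ 2) = X1 * real A * (U * (real N + 1) ^ 2)"
      by (simp only: mult_ac)
    have e2: "X2 * U * (2 * (real N + 1) ^ 2) = X2 * (2 * (U * (real N + 1) ^ 2))"
      by (simp only: mult_ac)
    have e3: "(X1 * real A + X2) * (2 * PP) = 2 * (X1 * real A * PP) + X2 * (2 * PP)"
      by (simp add: algebra_simps)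
    have nn: "X1 * real A * PP \<ge> 0" using X10 PP0 by simp
    show ?thesis unfolding e1 e2 hP PP_def[symmetric] e3 using nn by linarith
  qed
  finally have "real M * Bm \<le> (X1 * real A + X2) * (2 * (real N + 1) ^ (KX + KY + 2))" .
  with step_d show ?thesis unfolding T_def X1_def X2_def KX_def KY_def by linarith
qed


theorem lemma2:
  shows "\<exists>(C::real) (d::nat). \<forall>(P::'x::finite pmf) (Q::'x \<Rightarrow> 'y::finite pmf) (star::'x)
            (M::nat) (N::nat) (A::nat) (t1::real) (t2::real) (m::nat) (l::nat).
     m \<in> {1..M} \<longrightarrow> A \<ge> 1 \<longrightarrow> l \<in> {1..A} \<longrightarrow>
     (\<Sum>m'\<in>{1..M} - {m}. \<Sum>n=1..A + N - 1. \<Sum>i=1..min N n.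
        measure_pmf.prob (joint_pmf P Q star M N A m l)
          {(c, y). E_all Q star M t1 t2 m' n i c y})
     \<le> (real M powr (-(t1 + t2 - 1)) * real A + real M powr (-(t2 - 1))) * (C * (real N + 1) ^ d)"
proof (rule exI[of _ 2], rule exI[of _ "CARD('x \<times> 'y) + CARD('y \<times> unit) + 2"], intro allI impI)
  fix P :: "'x pmf" and Q :: "'x \<Rightarrow> 'y pmf" and star :: 'x and M N A :: nat and t1 t2 :: real and m l :: nat
  assume "m \<in> {1..M}" "A \<ge> 1" "l \<in> {1..A}"
  then show "(\<Sum>m'\<in>{1..M} - {m}. \<Sum>n=1..A + N - 1. \<Sum>i=1..min N n.
        measure_pmf.prob (joint_pmf P Q star M N A m l)
          {(c, y). E_all Q star M t1 t2 m' n i c y})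
     \<le> (real M powr (-(t1 + t2 - 1)) * real A + real M powr (-(t2 - 1))) *
        (2 * (real N + 1) ^ (CARD('x \<times> 'y) + CARD('y \<times> unit) + 2))"
    by (rule main_bound)
qed

end
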